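(* Let $\mathfrak{g}_1,\mathfrak{g}_2$ be nilpotent Lie algebras of dimensions $m_1,m_2$ with $n_1,n_2$ generators as below. If $\mathfrak{g}_i$ is nonsplit for $i=1,2$, then the product by generators $\mathfrak{g}_1\underline{\times}\mathfrak{g}_2$ is an $(m_1+m_2+n_1n_2)$-dimensional nonsplit Lie algebra of nilindex $\max\{n(\mathfrak{g}_1),n(\mathfrak{g}_2)\}$.
   Context: All Lie algebras are finite-dimensional, complex, nilpotent and nonabelian. $C^1\mathfrak{g}=[\mathfrak{g},\mathfrak{g}]$, $C^{k+1}\mathfrak{g}=[\mathfrak{g},C^k\mathfrak{g}]$; the nilindex $n(\mathfrak{g})$ is the length of this central descending sequence (least $k$ with $C^k\mathfrak{g}=0$). A Lie algebra is nonsplit if it is not the direct sum of two nonzero ideals. Product by generators: take bases $\{X_1,\dots,X_{m_1}\}$ of $\mathfrak{g}_1$ and $\{X'_1,\dots,X'_{m_2}\}$ of $\mathfrak{g}_2$ such that $X_1,\dots,X_{n_1}$ generate $\mathfrak{g}_1$ and $X_{n_1+1},\dots,X_{m_1}$ span $C^1\mathfrak{g}_1$, and similarly $X'_1,\dots,X'_{n_2}$ generate $\mathfrak{g}_2$ and the remaining $X'_j$ span $C^1\mathfrak{g}_2$. Then $\mathfrak{g}_1\underline{\times}\mathfrak{g}_2$ is the Lie algebra on $\mathfrak{g}_1\oplus\mathfrak{g}_2\oplus\langle Z_1,\dots,Z_{n_1n_2}\rangle$ with the brackets of $\mathfrak{g}_1$ and of $\mathfrak{g}_2$, $[X_i,X'_j]=Z_{(i-1)n_2+j}$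 for $1\le i\le n_1$, $1\le j\le n_2$, $[X_i,X'_j]=0$ if $i>n_1$ or $j>n_2$, and the $Z_k$ central (the central extension of $\mathfrak{g}_1\oplus\mathfrak{g}_2$ by the corresponding 2-cocycle). *)

theory Defs
  imports Complex_Main
begin

text \<open>A finite-dimensional complex Lie algebra of dimension m is given by structure
constants c i j k w.r.t. the basis e_0,...,e_{m-1}: [e_i,e_j] = sum_k c i j k e_k.\<close>

definition vecs :: "nat \<Rightarrow> (nat \<Rightarrow> complex) set" where
  "vecs m = {v. \<forall>i\<ge>m. v i = 0}"

definition bvec :: "nat \<Rightarrow> nat \<Rightarrow> complex" where
  "bvec i = (\<lambda>k. if k = i then 1 else 0)"

definition br :: "(nat \<Rightarrow> nat \<Rightarrow> nat \<Rightarrow> complex) \<Rightarrow> nat \<Rightarrow>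
    (nat \<Rightarrow> complex) \<Rightarrow> (nat \<Rightarrow> complex) \<Rightarrow> nat \<Rightarrow> complex" where
  "br c m x y = (\<lambda>k. if k < m then (\<Sum>i<m. \<Sum>j<m. x i * y j * c i j k) else 0)"

definition is_lie_alg :: "(nat \<Rightarrow> nat \<Rightarrow> nat \<Rightarrow> complex) \<Rightarrow> nat \<Rightarrow> bool" where
  "is_lie_alg c m \<longleftrightarrow>
     (\<forall>x\<in>vecs m. br c m x x = (\<lambda>_. 0)) \<and>
     (\<forall>x\<in>vecs m. \<forall>y\<in>vecs m. \<forall>z\<in>vecs m.
        (\<lambda>k. br c m x (br c m y z) k + br c m y (br c m z x) k + br c m z (br c m x y) k)
          = (\<lambda>_. 0))"

definition lin_span :: "(nat \<Rightarrow> complex) set \<Rightarrow> (nat \<Rightarrow> complex) set" where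
  "lin_span S = {v. \<exists>F a. finite F \<and> F \<subseteq> S \<and> v = (\<lambda>k. \<Sum>x\<in>F. a x * x k)}"

definition subspace_of :: "nat \<Rightarrow> (nat \<Rightarrow> complex) set \<Rightarrow> bool" where
  "subspace_of m A \<longleftrightarrow> A \<subseteq> vecs m \<and> (\<lambda>_. 0) \<in> A \<and>
     (\<forall>x\<in>A. \<forall>y\<in>A. (\<lambda>k. x k + y k) \<in> A) \<and> (\<forall>a. \<forall>x\<in>A. (\<lambda>k. a * x k) \<in> A)"

definition subalgebra :: "(nat \<Rightarrow> nat \<Rightarrow> nat \<Rightarrow> complex) \<Rightarrow> nat \<Rightarrow> (nat \<Rightarrow> complex) set \<Rightarrow> bool" where
  "subalgebra c m A \<longleftrightarrow> subspace_of m A \<and> (\<forall>x\<in>A. \<forall>y\<in>A. br c m x y \<in> A)"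

definition lie_ideal :: "(nat \<Rightarrow> nat \<Rightarrow> nat \<Rightarrow> complex) \<Rightarrow> nat \<Rightarrow> (nat \<Rightarrow> complex) set \<Rightarrow> bool" where
  "lie_ideal c m I \<longleftrightarrow> subspace_of m I \<and> (\<forall>x\<in>vecs m. \<forall>y\<in>I. br c m x y \<in> I)"

definition generated :: "(nat \<Rightarrow> nat \<Rightarrow> nat \<Rightarrow> complex) \<Rightarrow> nat \<Rightarrow> (nat \<Rightarrow> complex) set \<Rightarrow> (nat \<Rightarrow> complex) set" where
  "generated c m S = \<Inter>{A. subalgebra c m A \<and> S \<subseteq> A}"

fun lcs :: "(nat \<Rightarrow> nat \<Rightarrow> nat \<Rightarrow> complex) \<Rightarrow> nat \<Rightarrow> nat \<Rightarrow> (nat \<Rightarrow> complex) set" where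
  "lcs c m 0 = vecs m"
| "lcs c m (Suc k) = lin_span {br c m x y | x y. x \<in> vecs m \<and> y \<in> lcs c m k}"

definition nilpotent_lie :: "(nat \<Rightarrow> nat \<Rightarrow> nat \<Rightarrow> complex) \<Rightarrow> nat \<Rightarrow> bool" where
  "nilpotent_lie c m \<longleftrightarrow> (\<exists>k. lcs c m k = {\<lambda>_. 0})"

definition nilindex :: "(nat \<Rightarrow> nat \<Rightarrow> nat \<Rightarrow> complex) \<Rightarrow> nat \<Rightarrow> nat" where
  "nilindex c m = (LEAST k. lcs c m k = {\<lambda>_. 0})"

definition nonabelian :: "(nat \<Rightarrow> nat \<Rightarrow> nat \<Rightarrow> complex) \<Rightarrow> nat \<Rightarrow> bool" where
  "nonabelian c m \<longleftrightarrow> lcs c m 1 \<noteq> {\<lambda>_. 0}"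

definition nonsplit :: "(nat \<Rightarrow> nat \<Rightarrow> nat \<Rightarrow> complex) \<Rightarrow> nat \<Rightarrow> bool" where
  "nonsplit c m \<longleftrightarrow> \<not> (\<exists>I J. lie_ideal c m I \<and> lie_ideal c m J \<and>
      I \<noteq> {\<lambda>_. 0} \<and> J \<noteq> {\<lambda>_. 0} \<and> I \<inter> J = {\<lambda>_. 0} \<and>
      {(\<lambda>k. x k + y k) | x y. x \<in> I \<and> y \<in> J} = vecs m)"

definition adapted :: "(nat \<Rightarrow> nat \<Rightarrow> nat \<Rightarrow> complex) \<Rightarrow> nat \<Rightarrow> nat \<Rightarrow> bool" where
  "adapted c m n \<longleftrightarrow> n \<le> m \<and> generated c m (bvec ` {..<n}) = vecs m \<and>
      lin_span (bvec ` {n..<m}) = lcs c m 1"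

text \<open>Product by generators. Basis indices: 0..<m1 for g1 (X_i), m1..<m1+m2 for g2 (X'_j),
  m1+m2+i*n2+j for Z_{(i)n2+j} (0-based), so [X_i, X'_j] = Z.\<close>
definition prod_gen :: "(nat \<Rightarrow> nat \<Rightarrow> nat \<Rightarrow> complex) \<Rightarrow> nat \<Rightarrow> nat \<Rightarrow>
   (nat \<Rightarrow> nat \<Rightarrow> nat \<Rightarrow> complex) \<Rightarrow> nat \<Rightarrow> nat \<Rightarrow> (nat \<Rightarrow> nat \<Rightarrow> nat \<Rightarrow> complex)" where
  "prod_gen c1 m1 n1 c2 m2 n2 = (\<lambda>i j k.
     if i < m1 \<and> j < m1 then (if k < m1 then c1 i j k else 0)
     else if m1 \<le> i \<and> i < m1 + m2 \<and> m1 \<le> j \<and> j < m1 + m2 then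
       (if m1 \<le> k \<and> k < m1 + m2 then c2 (i - m1) (j - m1) (k - m1) else 0)
     else if i < n1 \<and> m1 \<le> j \<and> j < m1 + n2 then
       (if k = m1 + m2 + i * n2 + (j - m1) then 1 else 0)
     else if j < n1 \<and> m1 \<le> i \<and> i < m1 + n2 then
       (if k = m1 + m2 + j * n2 + (i - m1) then -1 else 0)
     else 0)"

end

theory Submission
  imports Defs
begin

lemma spanI: "finite F \<Longrightarrow> F \<subseteq> S \<Longrightarrow> v = (\<lambda>k. \<Sum>z\<in>F. a z * z k) \<Longrightarrow> v \<in> lin_span S"
  unfolding lin_span_def by blast

lemma spanE: "v \<in> lin_span S \<Longrightarrow> (\<And>F a. finite F \<Longrightarrow> F \<subseteq> S \<Longrightarrow> v = (\<lambda>k. \<Sum>z\<in>F. a z * z k) \<Longrightarrow> P) \<Longrightarrow> P"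
  unfolding lin_span_def by blast

lemma span_base: "x \<in> S \<Longrightarrow> x \<in> lin_span S"
  unfolding lin_span_def
  by (rule CollectI, rule exI[of _ "{x}"], rule exI[of _ "\<lambda>_. 1"]) auto

lemma span_zero: "(\<lambda>_. 0) \<in> lin_span S"
  unfolding lin_span_def
  by (rule CollectI, rule exI[of _ "{}"]) auto

lemma span_add:
  assumes "x \<in> lin_span S" "y \<in> lin_span S"
  shows "(\<lambda>k. x k + y k) \<in> lin_span S"
proof -
  obtain F a where F: "finite F" "F \<subseteq> S" "x = (\<lambda>k. \<Sum>z\<in>F. a z * z k)"
    using assms(1) by (rule spanE)
  obtain G b where G: "finite G" "G \<subseteq> S" "y = (\<lambda>k. \<Sum>z\<in>G. b z * z k)"
    using assms(2) by (rule spanE)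
  define c where "c z = (if z \<in> F then a z else 0) + (if z \<in> G then b z else 0)" for z
  have "(\<lambda>k. x k + y k) = (\<lambda>k. \<Sum>z\<in>F\<union>G. c z * z k)"
  proof
    fix k
    have "\<And>z. c z * z k = (if z \<in> F then a z * z k else 0) + (if z \<in> G then b z * z k else 0)"
      unfolding c_def by (simp add: distrib_right)
    then have "(\<Sum>z\<in>F\<union>G. c z * z k) = (\<Sum>z\<in>F\<union>G. (if z \<in> F then a z * z k else 0))
        + (\<Sum>z\<in>F\<union>G. (if z \<in> G then b z * z k else 0))"
      by (simp add: sum.distrib)
    also have "\<dots> = (\<Sum>z\<in>F. a z * z k) + (\<Sum>z\<in>G. b z * z k)"
      using F(1) G(1) by (simp add: sum.If_cases Int_absorb1 Int_absorb2)
    finally show "x k + y k = (\<Sum>z\<in>F\<union>G. c z * z k)" using F G by simp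
  qed
  then show ?thesis using F G by (intro spanI[of "F\<union>G" _ _ c]) auto
qed

lemma span_scale:
  assumes "x \<in> lin_span S"
  shows "(\<lambda>k. c * x k) \<in> lin_span S"
proof -
  obtain F a where F: "finite F" "F \<subseteq> S" "x = (\<lambda>k. \<Sum>z\<in>F. a z * z k)"
    using assms(1) by (rule spanE)
  have "(\<lambda>k. c * x k) = (\<lambda>k. \<Sum>z\<in>F. (c * a z) * z k)"
    using F by (simp add: sum_distrib_left mult.assoc)
  then show ?thesis using F by (intro spanI[of F _ _ "\<lambda>z. c * a z"]) auto
qed

definition closed_sp :: "(nat \<Rightarrow> complex) set \<Rightarrow> bool" where
  "closed_sp B \<longleftrightarrow> (\<lambda>_. 0) \<in> B \<and> (\<forall>x\<in>B. \<forall>y\<in>B. (\<lambda>k. x k + y k) \<in> B) \<and> (\<forall>c. \<forall>x\<in>B. (\<lambda>k. c * x k) \<in> B)"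

lemma closed_span: "closed_sp (lin_span S)"
  unfolding closed_sp_def using span_zero span_add span_scale by blast

lemma closed_sum:
  assumes "closed_sp B" "finite F" "\<And>z. z \<in> F \<Longrightarrow> f z \<in> B"
  shows "(\<lambda>k. \<Sum>z\<in>F. f z k) \<in> B"
  using assms(2,3)
proof (induction F rule: finite_induct)
  case empty then show ?case using assms(1) unfolding closed_sp_def by simp
next
  case (insert x F)
  then show ?case using assms(1) unfolding closed_sp_def by simp
qed

lemma span_sub:
  assumes "closed_sp B" "S \<subseteq> B"
  shows "lin_span S \<subseteq> B"
proof
  fix v assume "v \<in> lin_span S"
  then obtain F a where F: "finite F" "F \<subseteq> S" "v = (\<lambda>k. \<Sum>z\<in>F. a z * z k)"
    by (rule spanE)
  have "(\<lambda>k. \<Sum>z\<in>F. (\<lambda>k. a z * z k) k) \<in> B"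
    apply (rule closed_sum[OF assms(1) F(1)])
    using assms F unfolding closed_sp_def by blast
  then show "v \<in> B" using F by simp
qed

lemma span_mono: "S \<subseteq> T \<Longrightarrow> lin_span S \<subseteq> lin_span T"
  by (rule span_sub[OF closed_span]) (auto intro: span_base)

lemma span_vanish:
  assumes "v \<in> lin_span S" "\<And>s. s \<in> S \<Longrightarrow> s i = 0"
  shows "v i = 0"
proof -
  obtain F a where F: "finite F" "F \<subseteq> S" "v = (\<lambda>k. \<Sum>z\<in>F. a z * z k)"
    using assms(1) by (rule spanE)
  have "\<forall>z\<in>F. a z * z i = 0" using F(2) assms(2) by auto
  then show ?thesis using F(3) by (simp add: sum.neutral)
qed



definition r1 :: "nat \<Rightarrow> (nat \<Rightarrow> complex) \<Rightarrow> nat \<Rightarrow> complex" where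
  "r1 m x = (\<lambda>k. if k < m then x k else 0)"
definition r2 :: "nat \<Rightarrow> nat \<Rightarrow> (nat \<Rightarrow> complex) \<Rightarrow> nat \<Rightarrow> complex" where
  "r2 m1 m2 x = (\<lambda>k. if k < m2 then x (m1 + k) else 0)"
definition e2 :: "nat \<Rightarrow> nat \<Rightarrow> (nat \<Rightarrow> complex) \<Rightarrow> nat \<Rightarrow> complex" where
  "e2 m1 m2 v = (\<lambda>k. if m1 \<le> k \<and> k < m1 + m2 then v (k - m1) else 0)"
definition zt :: "nat \<Rightarrow> nat \<Rightarrow> nat \<Rightarrow> nat \<Rightarrow> (nat \<Rightarrow> complex) \<Rightarrow> (nat \<Rightarrow> complex) \<Rightarrow> nat \<Rightarrow> complex" where
  "zt m1 m2 n1 n2 x y = (\<lambda>k. if m1 + m2 \<le> k \<and> k < m1 + m2 + n1 * n2 then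
      x ((k - (m1 + m2)) div n2) * y (m1 + (k - (m1 + m2)) mod n2)
      - x (m1 + (k - (m1 + m2)) mod n2) * y ((k - (m1 + m2)) div n2) else 0)"

lemma sum_shift: "sum f {m1..<m1+(m2::nat)} = (\<Sum>i<m2. (f (m1 + i) :: complex))"
proof -
  have "{m1..<m1+m2} = (\<lambda>i. m1 + i) ` {..<m2}"
  proof (rule set_eqI, rule iffI)
    fix x assume "x \<in> {m1..<m1+m2}"
    then have "x = m1 + (x - m1)" "x - m1 \<in> {..<m2}" by auto
    then show "x \<in> (\<lambda>i. m1 + i) ` {..<m2}" by (rule image_eqI)
  qed auto
  then show ?thesis by (simp add: sum.reindex)
qed

lemma sum2_if:
  assumes "A \<subseteq> {..<M::nat}"
  shows "(\<Sum>i<M. \<Sum>j<M. if i \<in> A \<and> j \<in> A then f i j else (0::complex)) = (\<Sum>i\<in>A. \<Sum>j\<in>A. f i j)"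
proof -
  have "(\<Sum>j<M. if i \<in> A \<and> j \<in> A then f i j else 0) = (if i \<in> A then \<Sum>j\<in>A. f i j else 0)" for i
    using assms by (cases "i \<in> A") (auto intro!: sum.mono_neutral_cong_right)
  then show ?thesis using assms by (auto intro!: sum.mono_neutral_cong_right)
qed

lemma sum_delta2: "a < M \<Longrightarrow> b < (M::nat) \<Longrightarrow>
  (\<Sum>i<M. \<Sum>j<M. if i = a then if j = b then g i j else 0 else 0) = (g a b :: complex)"
proof -
  assume h: "a < M" "b < M"
  have "(\<Sum>j<M. if i = a then if j = b then g i j else 0 else 0) = (if i = a then g i b else 0)" for i
    using h by (cases "i = a") simp_all
  then show ?thesis using h by simp
qed

lemma divmod_unique: "r < (n::nat) \<Longrightarrow> (i * n + r) div n = i \<and> (i * n + r) mod n = r"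
  by simp

lemma br_closed:
  assumes nm: "n1 \<le> m1" "n2 \<le> m2"
  shows "br (prod_gen c1 m1 n1 c2 m2 n2) (m1 + m2 + n1 * n2) x y =
    (\<lambda>k. br c1 m1 (r1 m1 x) (r1 m1 y) k + e2 m1 m2 (br c2 m2 (r2 m1 m2 x) (r2 m1 m2 y)) k
        + zt m1 m2 n1 n2 x y k)"
proof
  fix k
  let ?P = "prod_gen c1 m1 n1 c2 m2 n2"
  let ?M = "m1 + m2 + n1 * n2"
  show "br ?P ?M x y k = br c1 m1 (r1 m1 x) (r1 m1 y) k + e2 m1 m2 (br c2 m2 (r2 m1 m2 x) (r2 m1 m2 y)) k
        + zt m1 m2 n1 n2 x y k"
  proof (cases "k < m1")
    case True
    have P: "?P i j k = (if i < m1 then (if j < m1 then c1 i j k else 0) else 0)" for i j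
      using True nm unfolding prod_gen_def by auto
    have "br ?P ?M x y k = (\<Sum>i<?M. \<Sum>j<?M. x i * y j * ?P i j k)"
      using True unfolding br_def by simp
    also have "\<dots> = (\<Sum>i<?M. \<Sum>j<?M. if i \<in> {..<m1} \<and> j \<in> {..<m1} then x i * y j * c1 i j k else 0)"
      unfolding P by (intro sum.cong) auto
    also have "\<dots> = (\<Sum>i<m1. \<Sum>j<m1. x i * y j * c1 i j k)"
      by (rule sum2_if) auto
    also have "\<dots> = br c1 m1 (r1 m1 x) (r1 m1 y) k"
      using True unfolding br_def r1_def by simp
    finally show ?thesis using True unfolding e2_def zt_def by simp
  next
    case F1: False
    show ?thesis
    proof (cases "k < m1 + m2")
      case True
      have P: "?P i j k = (if m1 \<le> i \<and> i < m1 + m2 then (if m1 \<le> j \<and> j < m1 + m2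
          then c2 (i - m1) (j - m1) (k - m1) else 0) else 0)" for i j
        using True F1 nm unfolding prod_gen_def by auto
      have "br ?P ?M x y k = (\<Sum>i<?M. \<Sum>j<?M. x i * y j * ?P i j k)"
        using True unfolding br_def by simp
      also have "\<dots> = (\<Sum>i<?M. \<Sum>j<?M. if i \<in> {m1..<m1+m2} \<and> j \<in> {m1..<m1+m2}
          then x i * y j * c2 (i - m1) (j - m1) (k - m1) else 0)"
        unfolding P by (intro sum.cong) auto
      also have "\<dots> = (\<Sum>i\<in>{m1..<m1+m2}. \<Sum>j\<in>{m1..<m1+m2}. x i * y j * c2 (i - m1) (j - m1) (k - m1))"
        by (rule sum2_if) auto
      also have "\<dots> = (\<Sum>i<m2. \<Sum>j<m2. x (m1 + i) * y (m1 + j) * c2 i j (k - m1))"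
        by (simp add: sum_shift)
      also have "\<dots> = br c2 m2 (r2 m1 m2 x) (r2 m1 m2 y) (k - m1)"
        using True F1 unfolding br_def r2_def by simp
      finally show ?thesis using True F1 unfolding e2_def zt_def br_def[of c1] by simp
    next
      case F2: False
      show ?thesis
      proof (cases "k < ?M")
        case False
        then show ?thesis unfolding br_def e2_def zt_def by simp
      next
        case True
        define p where "p = k - (m1 + m2)"
        define i0 where "i0 = p div n2"
        define j0 where "j0 = p mod n2"
        have n2: "n2 > 0" using True F2 by (cases n2) auto
        have pl: "p < n1 * n2" using True F2 unfolding p_def by simp
        have pe: "p = i0 * n2 + j0" unfolding i0_def j0_def by simp
        have i0: "i0 < n1" using pl unfolding i0_def
          by (simp add: less_mult_imp_div_less)
        have j0: "j0 < n2" using n2 unfolding j0_def by simp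
        have kp: "k = m1 + m2 + p" using F2 unfolding p_def by simp
        have eq3: "(i < n1 \<and> m1 \<le> j \<and> j < m1 + n2 \<and> k = m1 + m2 + i * n2 + (j - m1))
            \<longleftrightarrow> (i = i0 \<and> j = m1 + j0)" for i j
        proof
          assume h: "i < n1 \<and> m1 \<le> j \<and> j < m1 + n2 \<and> k = m1 + m2 + i * n2 + (j - m1)"
          then have "p = i * n2 + (j - m1)" "j - m1 < n2" using kp by auto
          then show "i = i0 \<and> j = m1 + j0" using h divmod_unique[of "j - m1" n2 i]
            unfolding i0_def j0_def by auto
        qed (use i0 j0 kp pe in auto)
        have eq4: "(j < n1 \<and> m1 \<le> i \<and> i < m1 + n2 \<and> k = m1 + m2 + j * n2 + (i - m1))
            \<longleftrightarrow> (j = i0 \<and> i = m1 + j0)" for i j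
          using eq3[of j i] .
        have P: "?P i j k = (if i = i0 \<and> j = m1 + j0 then 1 else if i = m1 + j0 \<and> j = i0 then -1 else 0)"
          for i j
        proof (cases "i < n1 \<and> m1 \<le> j \<and> j < m1 + n2")
          case T3: True
          then have "?P i j k = (if k = m1 + m2 + i * n2 + (j - m1) then 1 else 0)"
            using nm by (simp add: prod_gen_def)
          then show ?thesis using eq3[of i j] T3 nm by simp
        next
          case F3: False
          show ?thesis
          proof (cases "j < n1 \<and> m1 \<le> i \<and> i < m1 + n2")
            case T4: True
            then have "?P i j k = (if k = m1 + m2 + j * n2 + (i - m1) then -1 else 0)"
              using nm F3 by (simp add: prod_gen_def)
            moreover have "(k = m1 + m2 + j * n2 + (i - m1)) = (j = i0 \<and> i = m1 + j0)"
              using eq3[of j i] T4 by blast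
            moreover have "i \<noteq> i0" using T4 i0 nm by auto
            ultimately show ?thesis by simp
          next
            case F4: False
            then have "?P i j k = 0"
              using nm F3 F1 F2 by (simp add: prod_gen_def)
            moreover have "\<not> (i = i0 \<and> j = m1 + j0)" using F3 i0 j0 by auto
            moreover have "\<not> (i = m1 + j0 \<and> j = i0)" using F4 i0 j0 by auto
            ultimately show ?thesis by simp
          qed
        qed
        have ne: "i0 \<noteq> m1 + j0" using i0 nm by simp
        have "br ?P ?M x y k = (\<Sum>i<?M. \<Sum>j<?M. x i * y j * ?P i j k)"
          using True unfolding br_def by simp
        also have "\<dots> = (\<Sum>i<?M. \<Sum>j<?M. (if i = i0 then (if j = m1 + j0 then x i * y j else 0) else 0)
             - (if i = m1 + j0 then (if j = i0 then x i * y j else 0) else 0))"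
        proof (intro sum.cong refl)
          fix i j
          show "x i * y j * ?P i j k = (if i = i0 then (if j = m1 + j0 then x i * y j else 0) else 0)
             - (if i = m1 + j0 then (if j = i0 then x i * y j else 0) else 0)"
            using ne by (simp add: P)
        qed
        also have "\<dots> = x i0 * y (m1 + j0) - x (m1 + j0) * y i0"
          using i0 j0 nm by (simp add: sum_subtractf sum_delta2)
        also have "\<dots> = zt m1 m2 n1 n2 x y k"
          using True F2 unfolding zt_def p_def[symmetric] i0_def[symmetric] j0_def[symmetric] by simp
        finally show ?thesis using F1 F2 unfolding br_def e2_def by simp
      qed
    qed
  qed
qed



lemma br_vecs: "br c m x y \<in> vecs m"
  unfolding vecs_def br_def by simp

lemma br_zero_left: "br c m (\<lambda>_. 0) y = (\<lambda>_. 0)"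
  unfolding br_def by (rule ext) simp

lemma br_zero_right: "br c m x (\<lambda>_. 0) = (\<lambda>_. 0)"
  unfolding br_def by (rule ext) simp

lemma br_add_left: "br c m (\<lambda>k. x k + y k) z = (\<lambda>k. br c m x z k + br c m y z k)"
  unfolding br_def by (auto simp: distrib_right sum.distrib)

lemma br_add_right: "br c m z (\<lambda>k. x k + y k) = (\<lambda>k. br c m z x k + br c m z y k)"
  unfolding br_def by (auto simp: distrib_right distrib_left sum.distrib)

lemma br_scale_right: "br c m z (\<lambda>k. a * x k) = (\<lambda>k. a * br c m z x k)"
  unfolding br_def by (auto simp: sum_distrib_left algebra_simps)

lemma br_r1: "br c m x y = br c m (r1 m x) (r1 m y)"
  unfolding br_def r1_def by (auto intro!: sum.cong)

lemma r1_vecs: "r1 m x \<in> vecs m"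
  unfolding r1_def vecs_def by simp

lemma r1_id: "x \<in> vecs m \<Longrightarrow> r1 m x = x"
  unfolding r1_def vecs_def by auto

lemma vecs_closed: "closed_sp (vecs m)"
  unfolding closed_sp_def vecs_def by simp

lemma add_vecs: "x \<in> vecs m \<Longrightarrow> y \<in> vecs m \<Longrightarrow> (\<lambda>k. x k + y k) \<in> vecs m"
  unfolding vecs_def by simp

lemma br_antisym:
  assumes L: "is_lie_alg c m" and x: "x \<in> vecs m" and y: "y \<in> vecs m"
  shows "br c m x y = (\<lambda>k. - br c m y x k)"
proof -
  have a: "\<forall>x\<in>vecs m. br c m x x = (\<lambda>_. 0)" using L unfolding is_lie_alg_def by blast
  have "br c m (\<lambda>k. x k + y k) (\<lambda>k. x k + y k) = (\<lambda>_. 0)" using a add_vecs[OF x y] by blast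
  then have "(\<lambda>k. br c m x x k + br c m x y k + (br c m y x k + br c m y y k)) = (\<lambda>_. 0)"
    by (simp add: br_add_left br_add_right add.assoc)
  then have "(\<lambda>k. br c m x y k + br c m y x k) = (\<lambda>_. 0)"
    using a x y by simp
  then show ?thesis by (auto simp: fun_eq_iff add_eq_0_iff)
qed

lemma lcs_closed: "closed_sp (lcs c m k)"
  by (cases k) (simp_all add: vecs_closed closed_span)

lemma lcs_vecs: "lcs c m k \<subseteq> vecs m"
proof (cases k)
  case (Suc k')
  show ?thesis unfolding Suc lcs.simps
    by (rule span_sub[OF vecs_closed]) (auto simp: br_vecs)
qed simp

lemma lcs_zero: "(\<lambda>_. 0) \<in> lcs c m k"
  using lcs_closed unfolding closed_sp_def by blast

lemma br_in_lcs: "x \<in> vecs m \<Longrightarrow> y \<in> lcs c m k \<Longrightarrow> br c m x y \<in> lcs c m (Suc k)"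
  by (auto intro!: span_base)

lemma lcs_sub1: "lcs c m (Suc k) \<subseteq> lcs c m 1"
proof -
  have "br c m x y \<in> lcs c m 1" if "x \<in> vecs m" for x y
  proof -
    have "br c m x y = br c m x (r1 m y)" unfolding br_def r1_def by (auto intro!: sum.cong)
    then show ?thesis using that r1_vecs[of m y] br_in_lcs[of x m "r1 m y" c 0] by simp
  qed
  then show ?thesis unfolding lcs.simps(2)[of c m k]
    by (intro span_sub[OF lcs_closed]) blast
qed

lemma lcs_mono_zero: "lcs c m k = {\<lambda>_. 0} \<Longrightarrow> lcs c m (Suc k) = {\<lambda>_. 0}"
proof -
  assume h: "lcs c m k = {\<lambda>_. 0}"
  have cl: "closed_sp {\<lambda>_. (0::complex)}" unfolding closed_sp_def by simp
  have "{br c m x y |x y. x \<in> vecs m \<and> y \<in> lcs c m k} \<subseteq> {\<lambda>_. 0}"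
  proof
    fix v assume "v \<in> {br c m x y |x y. x \<in> vecs m \<and> y \<in> lcs c m k}"
    then obtain x y where "v = br c m x y" "y \<in> lcs c m k" by blast
    then show "v \<in> {\<lambda>_. 0}" using h by (simp add: br_zero_right)
  qed
  then have "lcs c m (Suc k) \<subseteq> {\<lambda>_. 0}"
    unfolding lcs.simps(2) by (rule span_sub[OF cl])
  then show ?thesis using lcs_zero by blast
qed

lemma lcs_mono_zero': "lcs c m k = {\<lambda>_. 0} \<Longrightarrow> k \<le> k' \<Longrightarrow> lcs c m k' = {\<lambda>_. 0}"
proof -
  assume h: "lcs c m k = {\<lambda>_. 0}" "k \<le> k'"
  show ?thesis using h(2)
  proof (induction k' rule: dec_induct)
    case base then show ?case by (rule h(1))
  next
    case (step n) show ?case by (rule lcs_mono_zero[OF step.IH])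
  qed
qed



locale pg =
  fixes c1 :: "nat \<Rightarrow> nat \<Rightarrow> nat \<Rightarrow> complex" and m1 n1 :: nat
    and c2 :: "nat \<Rightarrow> nat \<Rightarrow> nat \<Rightarrow> complex" and m2 n2 :: nat
  assumes L1: "is_lie_alg c1 m1" and A1: "adapted c1 m1 n1" and NA1: "nonabelian c1 m1"
      and L2: "is_lie_alg c2 m2" and A2: "adapted c2 m2 n2" and NA2: "nonabelian c2 m2"
begin

abbreviation "P \<equiv> prod_gen c1 m1 n1 c2 m2 n2"
abbreviation "M \<equiv> m1 + m2 + n1 * n2"
abbreviation "b1 \<equiv> br c1 m1"
abbreviation "b2 \<equiv> br c2 m2"
abbreviation "bP \<equiv> br P M"
abbreviation "E2 \<equiv> e2 m1 m2"
abbreviation "R2 \<equiv> r2 m1 m2"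
abbreviation "R1 \<equiv> r1 m1"
abbreviation "ZT \<equiv> zt m1 m2 n1 n2"

definition pi0 :: "(nat \<Rightarrow> complex) \<Rightarrow> bool" where
  "pi0 w \<longleftrightarrow> (\<forall>i<n1. w i = 0) \<and> (\<forall>j<n2. w (m1 + j) = 0)"

lemma nm: "n1 \<le> m1" "n2 \<le> m2"
  using A1 A2 unfolding adapted_def by auto

lemma closed: "bP x y = (\<lambda>k. b1 (R1 x) (R1 y) k + E2 (b2 (R2 x) (R2 y)) k + ZT x y k)"
  using br_closed[OF nm] .

lemma van1: "v \<in> lcs c1 m1 (Suc k) \<Longrightarrow> i < n1 \<Longrightarrow> v i = 0"
proof -
  assume h: "v \<in> lcs c1 m1 (Suc k)" "i < n1"
  then have "v \<in> lin_span (bvec ` {n1..<m1})" using lcs_sub1 A1 unfolding adapted_def by blast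
  then show ?thesis by (rule span_vanish) (use h(2) in \<open>auto simp: bvec_def\<close>)
qed

lemma van2: "v \<in> lcs c2 m2 (Suc k) \<Longrightarrow> i < n2 \<Longrightarrow> v i = 0"
proof -
  assume h: "v \<in> lcs c2 m2 (Suc k)" "i < n2"
  then have "v \<in> lin_span (bvec ` {n2..<m2})" using lcs_sub1 A2 unfolding adapted_def by blast
  then show ?thesis by (rule span_vanish) (use h(2) in \<open>auto simp: bvec_def\<close>)
qed

lemma b1_lcs1: "b1 (R1 x) (R1 y) \<in> lcs c1 m1 1"
  using br_in_lcs[of "R1 x" m1 "R1 y" c1 0] r1_vecs by simp

lemma b2_lcs1: "b2 (R2 x) (R2 y) \<in> lcs c2 m2 1"
proof -
  have "R2 y \<in> vecs m2" "R2 x \<in> vecs m2" unfolding r2_def vecs_def by auto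
  then show ?thesis using br_in_lcs[of "R2 x" m2 "R2 y" c2 0] by simp
qed

lemma bP_van1: "i < n1 \<Longrightarrow> bP x y i = 0"
  using van1[OF b1_lcs1[of x y, simplified One_nat_def]] nm unfolding closed e2_def zt_def by simp

lemma bP_van2: "j < n2 \<Longrightarrow> bP x y (m1 + j) = 0"
  using van2[OF b2_lcs1[of x y, simplified One_nat_def]] nm unfolding closed e2_def zt_def
  by (simp add: br_def)

lemma bP_pi0: "pi0 (bP x y)"
  unfolding pi0_def using bP_van1 bP_van2 by blast

lemma zt_pi0: "pi0 w \<Longrightarrow> ZT x w = (\<lambda>_. 0)"
proof
  fix k assume h: "pi0 w"
  show "ZT x w k = 0"
  proof (cases "m1 + m2 \<le> k \<and> k < M")
    case True
    define p where "p = k - (m1 + m2)"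
    have n2: "n2 > 0" using True by (cases n2) auto
    have "p < n1 * n2" using True unfolding p_def by linarith
    then have "p div n2 < n1" by (simp add: less_mult_imp_div_less)
    moreover have "p mod n2 < n2" using n2 by simp
    ultimately show ?thesis using h True unfolding pi0_def zt_def p_def[symmetric] by simp
  qed (auto simp: zt_def)
qed

lemma zt_self: "ZT x x = (\<lambda>_. 0)"
  unfolding zt_def by (auto simp: mult.commute)

lemma R1_bP: "R1 (bP y z) = b1 (R1 y) (R1 z)"
  unfolding closed by (auto simp: fun_eq_iff r1_def e2_def zt_def br_def[of c1])

lemma R2_bP: "R2 (bP y z) = b2 (R2 y) (R2 z)"
  unfolding closed by (auto simp: fun_eq_iff r2_def e2_def zt_def br_def[of c1] br_def[of c2])

lemma R1_vecs: "R1 x \<in> vecs m1" by (rule r1_vecs)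
lemma R2_vecs: "R2 x \<in> vecs m2" unfolding r2_def vecs_def by auto

lemma double: "bP x (bP y z) = (\<lambda>k. b1 (R1 x) (b1 (R1 y) (R1 z)) k + E2 (b2 (R2 x) (b2 (R2 y) (R2 z))) k)"
  using zt_pi0[OF bP_pi0, of x y z] unfolding closed[of x "bP y z"] R1_bP R2_bP by simp

lemma lie: "is_lie_alg P M"
  unfolding is_lie_alg_def
proof (intro conjI ballI)
  fix x assume "x \<in> vecs M"
  have a1: "b1 (R1 x) (R1 x) = (\<lambda>_. 0)" using L1 R1_vecs unfolding is_lie_alg_def by blast
  have a2: "b2 (R2 x) (R2 x) = (\<lambda>_. 0)" using L2 R2_vecs unfolding is_lie_alg_def by blast
  show "bP x x = (\<lambda>_. 0)" unfolding closed a1 a2 zt_self by (simp add: e2_def)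
next
  fix x y z assume "x \<in> vecs M" "y \<in> vecs M" "z \<in> vecs M"
  have j1: "b1 (R1 x) (b1 (R1 y) (R1 z)) k + b1 (R1 y) (b1 (R1 z) (R1 x)) k + b1 (R1 z) (b1 (R1 x) (R1 y)) k = 0" for k
    using L1 R1_vecs unfolding is_lie_alg_def by (metis (mono_tags, lifting))
  have j2: "b2 (R2 x) (b2 (R2 y) (R2 z)) k + b2 (R2 y) (b2 (R2 z) (R2 x)) k + b2 (R2 z) (b2 (R2 x) (R2 y)) k = 0" for k
    using L2 R2_vecs unfolding is_lie_alg_def by (metis (mono_tags, lifting))
  show "(\<lambda>k. bP x (bP y z) k + bP y (bP z x) k + bP z (bP x y) k) = (\<lambda>_. 0)"
  proof
    fix k
    have "E2 (b2 (R2 x) (b2 (R2 y) (R2 z))) k + E2 (b2 (R2 y) (b2 (R2 z) (R2 x))) k + E2 (b2 (R2 z) (b2 (R2 x) (R2 y))) k = 0"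
      using j2[of "k - m1"] unfolding e2_def by simp
    then show "bP x (bP y z) k + bP y (bP z x) k + bP z (bP x y) k = 0"
      unfolding double using j1[of k] by (simp add: algebra_simps)
  qed
qed

end


context pg
begin

lemma zt_cases: "ZT x w k = 0 \<or> (\<exists>i<n1. \<exists>j<n2. ZT x w k = x i * w (m1 + j) - x (m1 + j) * w i)"
proof (cases "m1 + m2 \<le> k \<and> k < M")
  case True
  define p where "p = k - (m1 + m2)"
  have n2: "n2 > 0" using True by (cases n2) auto
  have "p < n1 * n2" using True unfolding p_def by linarith
  then have "p div n2 < n1" by (simp add: less_mult_imp_div_less)
  moreover have "p mod n2 < n2" using n2 by simp
  moreover have "ZT x w k = x (p div n2) * w (m1 + p mod n2) - x (m1 + p mod n2) * w (p div n2)"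
    using True unfolding zt_def p_def by simp
  ultimately show ?thesis by blast
qed (auto simp: zt_def)

lemma e2_zero: "E2 (\<lambda>_. 0) = (\<lambda>_. 0)" unfolding e2_def by (rule ext) simp

lemma R2_zero: "x \<in> vecs m1 \<Longrightarrow> R2 x = (\<lambda>_. 0)"
  unfolding r2_def vecs_def by (rule ext) simp

lemma emb1: assumes "x \<in> vecs m1" "y \<in> vecs m1" shows "bP x y = b1 x y"
proof -
  have "ZT x y k = 0" for k
    using zt_cases[of x y k] assms unfolding vecs_def by auto
  then show ?thesis unfolding closed r1_id[OF assms(1)] r1_id[OF assms(2)] R2_zero[OF assms(1)]
    R2_zero[OF assms(2)] br_zero_left e2_zero by simp
qed

lemma R1_E2: "R1 (E2 v) = (\<lambda>_. 0)" unfolding r1_def e2_def by (rule ext) simp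
lemma R2_E2: "v \<in> vecs m2 \<Longrightarrow> R2 (E2 v) = v" unfolding r2_def e2_def vecs_def by (rule ext) simp

lemma emb2: assumes "v \<in> vecs m2" "w \<in> vecs m2" shows "bP (E2 v) (E2 w) = E2 (b2 v w)"
proof -
  have "ZT (E2 v) (E2 w) k = 0" for k
    using zt_cases[of "E2 v" "E2 w" k] nm unfolding e2_def by auto
  then show ?thesis unfolding closed R1_E2 R2_E2[OF assms(1)] R2_E2[OF assms(2)] br_zero_left
    by (simp add: br_def[of c1])
qed

lemma e2_span: "v \<in> lin_span S \<Longrightarrow> E2 v \<in> lin_span (E2 ` S)"
proof -
  assume v: "v \<in> lin_span S"
  have cl: "closed_sp {v. E2 v \<in> lin_span (E2 ` S)}"
    unfolding closed_sp_def
  proof (intro conjI allI ballI; simp)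
    show "E2 (\<lambda>_. 0) \<in> lin_span (E2 ` S)" unfolding e2_zero by (rule span_zero)
  next
    fix x y assume "E2 x \<in> lin_span (E2 ` S)" "E2 y \<in> lin_span (E2 ` S)"
    then have "(\<lambda>k. E2 x k + E2 y k) \<in> lin_span (E2 ` S)" by (rule span_add)
    moreover have "(\<lambda>k. E2 x k + E2 y k) = E2 (\<lambda>k. x k + y k)" unfolding e2_def by (rule ext) simp
    ultimately show "E2 (\<lambda>k. x k + y k) \<in> lin_span (E2 ` S)" by simp
  next
    fix c x assume "E2 x \<in> lin_span (E2 ` S)"
    then have "(\<lambda>k. c * E2 x k) \<in> lin_span (E2 ` S)" by (rule span_scale)
    moreover have "(\<lambda>k. c * E2 x k) = E2 (\<lambda>k. c * x k)" unfolding e2_def by (rule ext) simp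
    ultimately show "E2 (\<lambda>k. c * x k) \<in> lin_span (E2 ` S)" by simp
  qed
  have "S \<subseteq> {v. E2 v \<in> lin_span (E2 ` S)}" by (auto intro: span_base)
  then show ?thesis using span_sub[OF cl] v by blast
qed

lemma genI: "x \<in> vecs m \<Longrightarrow> y \<in> L \<Longrightarrow> br c m x y \<in> {br c m x y | x y. x \<in> vecs m \<and> y \<in> L}"
  by auto

lemma vecs1M: "vecs m1 \<subseteq> vecs M" unfolding vecs_def by auto
lemma E2_vecs: "E2 v \<in> vecs M" unfolding vecs_def e2_def by auto

lemma lcs_emb1: "lcs c1 m1 k \<subseteq> lcs P M k"
proof (induction k)
  case 0 then show ?case using vecs1M by simp
next
  case (Suc k)
  have "{b1 x y | x y. x \<in> vecs m1 \<and> y \<in> lcs c1 m1 k} \<subseteq> {bP x y | x y. x \<in> vecs M \<and> y \<in> lcs P M k}"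
  proof
    fix v assume "v \<in> {b1 x y | x y. x \<in> vecs m1 \<and> y \<in> lcs c1 m1 k}"
    then obtain x y where xy: "v = b1 x y" "x \<in> vecs m1" "y \<in> lcs c1 m1 k" by blast
    have "y \<in> vecs m1" using xy(3) lcs_vecs by blast
    then have "v = bP x y" using emb1 xy by simp
    moreover have "x \<in> vecs M" using xy vecs1M by blast
    moreover have "y \<in> lcs P M k" using xy Suc by blast
    ultimately show "v \<in> {bP x y | x y. x \<in> vecs M \<and> y \<in> lcs P M k}" using genI by simp
  qed
  then show ?case unfolding lcs.simps by (rule span_mono)
qed

lemma lcs_emb2: "E2 ` lcs c2 m2 k \<subseteq> lcs P M k"
proof (induction k)
  case 0 then show ?case using E2_vecs by auto
next
  case (Suc k)
  have "E2 ` {b2 x y | x y. x \<in> vecs m2 \<and> y \<in> lcs c2 m2 k} \<subseteq> {bP x y | x y. x \<in> vecs M \<and> y \<in> lcs P M k}"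
  proof
    fix v assume "v \<in> E2 ` {b2 x y | x y. x \<in> vecs m2 \<and> y \<in> lcs c2 m2 k}"
    then obtain x y where xy: "v = E2 (b2 x y)" "x \<in> vecs m2" "y \<in> lcs c2 m2 k" by blast
    have "y \<in> vecs m2" using xy(3) lcs_vecs by blast
    then have "v = bP (E2 x) (E2 y)" using emb2 xy by simp
    moreover have "E2 y \<in> lcs P M k" using xy Suc by blast
    ultimately show "v \<in> {bP x y | x y. x \<in> vecs M \<and> y \<in> lcs P M k}" using genI E2_vecs by simp
  qed
  then have "lin_span (E2 ` {b2 x y | x y. x \<in> vecs m2 \<and> y \<in> lcs c2 m2 k}) \<subseteq> lcs P M (Suc k)"
    unfolding lcs.simps by (rule span_mono)
  then show ?case unfolding lcs.simps using e2_span by blast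
qed

end


context pg
begin

definition SS :: "nat \<Rightarrow> (nat \<Rightarrow> complex) set" where
  "SS k = {w. \<exists>u v. u \<in> lcs c1 m1 k \<and> v \<in> lcs c2 m2 k \<and> w = (\<lambda>t. u t + E2 v t)}"
definition TT :: "nat \<Rightarrow> (nat \<Rightarrow> complex) set" where
  "TT k = {w. \<exists>u v z. u \<in> lcs c1 m1 k \<and> v \<in> lcs c2 m2 k \<and> (\<forall>t<m1+m2. z t = 0)
      \<and> w = (\<lambda>t. u t + E2 v t + z t)}"

lemma SSI: "u \<in> lcs c1 m1 k \<Longrightarrow> v \<in> lcs c2 m2 k \<Longrightarrow> w = (\<lambda>t. u t + E2 v t) \<Longrightarrow> w \<in> SS k"
  unfolding SS_def by (rule CollectI, rule exI[of _ u], rule exI[of _ v]) simp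
lemma SSE: "w \<in> SS k \<Longrightarrow> (\<And>u v. u \<in> lcs c1 m1 k \<Longrightarrow> v \<in> lcs c2 m2 k \<Longrightarrow> w = (\<lambda>t. u t + E2 v t) \<Longrightarrow> R) \<Longrightarrow> R"
  unfolding SS_def by (elim CollectE exE conjE)
lemma TTI: "u \<in> lcs c1 m1 k \<Longrightarrow> v \<in> lcs c2 m2 k \<Longrightarrow> (\<forall>t<m1+m2. z t = 0) \<Longrightarrow>
   w = (\<lambda>t. u t + E2 v t + z t) \<Longrightarrow> w \<in> TT k"
  unfolding TT_def by (rule CollectI, rule exI[of _ u], rule exI[of _ v], rule exI[of _ z]) simp
lemma TTE: "w \<in> TT k \<Longrightarrow> (\<And>u v z. u \<in> lcs c1 m1 k \<Longrightarrow> v \<in> lcs c2 m2 k \<Longrightarrow> (\<forall>t<m1+m2. z t = 0) \<Longrightarrow>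
   w = (\<lambda>t. u t + E2 v t + z t) \<Longrightarrow> R) \<Longrightarrow> R"
  unfolding TT_def by (elim CollectE exE conjE)

lemma lcs_cl: "(\<lambda>_. 0) \<in> lcs c m k" "x \<in> lcs c m k \<Longrightarrow> y \<in> lcs c m k \<Longrightarrow> (\<lambda>t. x t + y t) \<in> lcs c m k"
   "x \<in> lcs c m k \<Longrightarrow> (\<lambda>t. a * x t) \<in> lcs c m k"
  using lcs_closed[of c m k] unfolding closed_sp_def by blast+

lemma SS_closed: "closed_sp (SS k)"
  unfolding closed_sp_def
proof (intro conjI allI ballI)
  show "(\<lambda>_. 0) \<in> SS k" by (rule SSI[OF lcs_cl(1) lcs_cl(1)]) (simp add: e2_zero)
next
  fix x y assume "x \<in> SS k" "y \<in> SS k"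
  obtain u v where uv1: "u \<in> lcs c1 m1 k" "v \<in> lcs c2 m2 k" "x = (\<lambda>t. u t + E2 v t)"
    using \<open>x \<in> SS k\<close> by (rule SSE)
  obtain u' v' where uv2: "u' \<in> lcs c1 m1 k" "v' \<in> lcs c2 m2 k" "y = (\<lambda>t. u' t + E2 v' t)"
    using \<open>y \<in> SS k\<close> by (rule SSE)
  note uv = uv1 uv2
  show "(\<lambda>t. x t + y t) \<in> SS k"
    by (rule SSI[OF lcs_cl(2)[OF uv(1) uv(4)] lcs_cl(2)[OF uv(2) uv(5)]]) (auto simp: uv e2_def fun_eq_iff)
next
  fix a x assume "x \<in> SS k"
  then obtain u v where uv: "u \<in> lcs c1 m1 k" "v \<in> lcs c2 m2 k" "x = (\<lambda>t. u t + E2 v t)" by (rule SSE)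
  show "(\<lambda>t. a * x t) \<in> SS k"
    by (rule SSI[OF lcs_cl(3)[OF uv(1)] lcs_cl(3)[OF uv(2)]]) (auto simp: uv e2_def fun_eq_iff algebra_simps)
qed

lemma TT_closed: "closed_sp (TT k)"
  unfolding closed_sp_def
proof (intro conjI allI ballI)
  show "(\<lambda>_. 0) \<in> TT k" by (rule TTI[OF lcs_cl(1) lcs_cl(1)]) (simp_all add: e2_zero)
next
  fix x y assume "x \<in> TT k" "y \<in> TT k"
  obtain u v z where uv1: "u \<in> lcs c1 m1 k" "v \<in> lcs c2 m2 k" "\<forall>t<m1+m2. z t = 0"
     "x = (\<lambda>t. u t + E2 v t + z t)" using \<open>x \<in> TT k\<close> by (rule TTE)
  obtain u' v' z' where uv2: "u' \<in> lcs c1 m1 k" "v' \<in> lcs c2 m2 k" "\<forall>t<m1+m2. z' t = 0" "y = (\<lambda>t. u' t + E2 v' t + z' t)"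
    using \<open>y \<in> TT k\<close> by (rule TTE)
  note uv = uv1 uv2
  show "(\<lambda>t. x t + y t) \<in> TT k"
    by (rule TTI[OF lcs_cl(2)[OF uv(1) uv(5)] lcs_cl(2)[OF uv(2) uv(6)], of "\<lambda>t. z t + z' t"])
       (auto simp: uv e2_def fun_eq_iff)
next
  fix a x assume "x \<in> TT k"
  then obtain u v z where uv: "u \<in> lcs c1 m1 k" "v \<in> lcs c2 m2 k" "\<forall>t<m1+m2. z t = 0"
     "x = (\<lambda>t. u t + E2 v t + z t)" by (rule TTE)
  show "(\<lambda>t. a * x t) \<in> TT k"
    by (rule TTI[OF lcs_cl(3)[OF uv(1)] lcs_cl(3)[OF uv(2)], of "\<lambda>t. a * z t"])
       (auto simp: uv e2_def fun_eq_iff algebra_simps)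
qed

lemma SS_TT: "SS k \<subseteq> TT k"
proof
  fix w assume "w \<in> SS k"
  then obtain u v where uv: "u \<in> lcs c1 m1 k" "v \<in> lcs c2 m2 k" "w = (\<lambda>t. u t + E2 v t)" by (rule SSE)
  show "w \<in> TT k" by (rule TTI[OF uv(1) uv(2), of "\<lambda>_. 0"]) (auto simp: uv)
qed

lemma TT_base: "lcs P M 1 \<subseteq> TT 1"
proof -
  have "bP x y \<in> TT 1" for x y
  proof (rule TTI[OF b1_lcs1 b2_lcs1, of "ZT x y"])
    show "\<forall>t<m1 + m2. ZT x y t = 0" unfolding zt_def by auto
  qed (rule closed)
  then show ?thesis unfolding One_nat_def lcs.simps
    by (intro span_sub[OF TT_closed]) auto
qed

lemma TT_step: assumes "lcs P M (Suc k) \<subseteq> TT (Suc k)"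
  shows "lcs P M (Suc (Suc k)) \<subseteq> SS (Suc (Suc k))"
proof -
  have "bP x y \<in> SS (Suc (Suc k))" if y: "y \<in> lcs P M (Suc k)" for x y
  proof -
    obtain u v z where uv: "u \<in> lcs c1 m1 (Suc k)" "v \<in> lcs c2 m2 (Suc k)" "\<forall>t<m1+m2. z t = 0"
      "y = (\<lambda>t. u t + E2 v t + z t)" using subsetD[OF assms y] by (rule TTE)
    have uvec: "u \<in> vecs m1" "v \<in> vecs m2" using uv lcs_vecs by blast+
    have r1y: "R1 y = u" using uvec(1) uv(3) unfolding uv(4) r1_def e2_def vecs_def by (auto simp: fun_eq_iff)
    have r2y: "R2 y = v"
    proof
      fix t show "R2 y t = v t"
        using uvec uv(3) unfolding uv(4) r2_def e2_def vecs_def by auto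
    qed
    have "pi0 y"
      unfolding pi0_def uv(4) using van1[OF uv(1)] van2[OF uv(2)] uv(3) nm uvec(1) unfolding e2_def vecs_def
      by auto
    then have "bP x y = (\<lambda>t. b1 (R1 x) u t + E2 (b2 (R2 x) v) t)"
      unfolding closed r1y r2y zt_pi0[OF \<open>pi0 y\<close>] by simp
    moreover have "b1 (R1 x) u \<in> lcs c1 m1 (Suc (Suc k))" by (rule br_in_lcs[OF R1_vecs uv(1)])
    moreover have "b2 (R2 x) v \<in> lcs c2 m2 (Suc (Suc k))" by (rule br_in_lcs[OF R2_vecs uv(2)])
    ultimately show ?thesis by (intro SSI[of "b1 (R1 x) u" _ "b2 (R2 x) v"])
  qed
  then show ?thesis unfolding lcs.simps(2)[of P M "Suc k"]
    by (intro span_sub[OF SS_closed]) auto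
qed

lemma TT_all: "lcs P M (Suc k) \<subseteq> TT (Suc k)"
proof (induction k)
  case 0 then show ?case using TT_base by simp
next
  case (Suc k) show ?case using TT_step[OF Suc.IH] SS_TT by (rule order.trans)
qed

lemma SS_all: "lcs P M (Suc (Suc k)) \<subseteq> SS (Suc (Suc k))"
  by (rule TT_step[OF TT_all])

lemma sub0: "A \<subseteq> {a} \<Longrightarrow> a \<in> A \<Longrightarrow> A = {a}" by auto

lemma E2_inj0: "v \<in> vecs m2 \<Longrightarrow> E2 v = (\<lambda>_. 0) \<Longrightarrow> v = (\<lambda>_. 0)"
proof
  fix t assume h: "v \<in> vecs m2" "E2 v = (\<lambda>_. 0)"
  show "v t = 0"
  proof (cases "t < m2")
    case True then show ?thesis using fun_cong[OF h(2), of "m1 + t"] unfolding e2_def by simp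
  qed (use h(1) in \<open>auto simp: vecs_def\<close>)
qed

lemma Q_iff: "lcs P M k = {\<lambda>_. 0} \<longleftrightarrow> (lcs c1 m1 k = {\<lambda>_. 0} \<and> lcs c2 m2 k = {\<lambda>_. 0})"
proof
  assume h: "lcs P M k = {\<lambda>_. 0}"
  have "lcs c1 m1 k \<subseteq> {\<lambda>_. 0}" using lcs_emb1[of k] unfolding h .
  moreover have "lcs c2 m2 k \<subseteq> {\<lambda>_. 0}"
  proof
    fix v assume v: "v \<in> lcs c2 m2 k"
    then have "E2 v \<in> lcs P M k" using lcs_emb2[of k] by (rule subsetD[OF _ imageI, rotated])
    then have "E2 v = (\<lambda>_. 0)" using h by simp
    then show "v \<in> {\<lambda>_. 0}" using E2_inj0 subsetD[OF lcs_vecs v] by simp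
  qed
  ultimately show "lcs c1 m1 k = {\<lambda>_. 0} \<and> lcs c2 m2 k = {\<lambda>_. 0}" using sub0[OF _ lcs_zero] by simp
next
  assume h: "lcs c1 m1 k = {\<lambda>_. 0} \<and> lcs c2 m2 k = {\<lambda>_. 0}"
  show "lcs P M k = {\<lambda>_. 0}"
  proof (cases "k \<ge> 2")
    case True
    then obtain k' where k: "k = Suc (Suc k')" by (cases k; cases "k - 1") auto
    have "SS k \<subseteq> {\<lambda>_. 0}"
    proof
      fix w assume "w \<in> SS k"
      then obtain u v where uv: "u \<in> lcs c1 m1 k" "v \<in> lcs c2 m2 k" "w = (\<lambda>t. u t + E2 v t)" by (rule SSE)
      then show "w \<in> {\<lambda>_. 0}" using h by (simp add: e2_zero)
    qed
    then have "lcs P M k \<subseteq> {\<lambda>_. 0}" using SS_all[of k'] unfolding k by (rule order.trans[rotated])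
    then show ?thesis using sub0[OF _ lcs_zero] by simp
  next
    case False
    then have "k \<le> 1" by simp
    then have "lcs c1 m1 1 = {\<lambda>_. 0}" by (rule lcs_mono_zero'[OF conjunct1[OF h]])
    then show ?thesis using NA1 unfolding nonabelian_def by simp
  qed
qed

lemma least_max:
  assumes "\<exists>k. A k" "\<exists>k. B k" "\<And>k k'. A k \<Longrightarrow> k \<le> k' \<Longrightarrow> A k'" "\<And>k k'. B k \<Longrightarrow> k \<le> k' \<Longrightarrow> B k'"
  shows "(LEAST k. A k \<and> B k) = max (LEAST k. A k) (LEAST k::nat. B k)"
proof (rule Least_equality)
  show "A (max (Least A) (Least B)) \<and> B (max (Least A) (Least B))"
    using assms(3)[OF LeastI_ex[OF assms(1)] max.cobounded1] assms(4)[OF LeastI_ex[OF assms(2)] max.cobounded2]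
    by simp
next
  fix y assume "A y \<and> B y"
  then show "max (Least A) (Least B) \<le> y" by (simp add: Least_le)
qed

lemma nil_results:
  assumes "nilpotent_lie c1 m1" "nilpotent_lie c2 m2"
  shows "nilpotent_lie P M" "nilindex P M = max (nilindex c1 m1) (nilindex c2 m2)"
proof -
  have eq: "(\<lambda>k. lcs P M k = {\<lambda>_. 0}) = (\<lambda>k. lcs c1 m1 k = {\<lambda>_. 0} \<and> lcs c2 m2 k = {\<lambda>_. 0})"
    by (rule ext) (rule Q_iff)
  have e1: "\<exists>k. lcs c1 m1 k = {\<lambda>_. 0}" and e2: "\<exists>k. lcs c2 m2 k = {\<lambda>_. 0}"
    using assms unfolding nilpotent_lie_def by blast+
  then obtain k1 k2 where kk: "lcs c1 m1 k1 = {\<lambda>_. 0}" "lcs c2 m2 k2 = {\<lambda>_. 0}" by blast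
  have "lcs c1 m1 (max k1 k2) = {\<lambda>_. 0}" "lcs c2 m2 (max k1 k2) = {\<lambda>_. 0}"
    using lcs_mono_zero'[OF kk(1) max.cobounded1] lcs_mono_zero'[OF kk(2) max.cobounded2] by auto
  then show "nilpotent_lie P M" unfolding nilpotent_lie_def by (intro exI[of _ "max k1 k2"]) (simp add: Q_iff)
  show "nilindex P M = max (nilindex c1 m1) (nilindex c2 m2)"
    unfolding nilindex_def eq
    by (rule least_max[OF e1 e2]) (erule lcs_mono_zero', assumption)+
qed

end


lemma alg1: "- ((a::complex) * b) = (1 - a) * b \<Longrightarrow> b = 0"
  by (simp add: algebra_simps)

lemma alg2: "(g::complex) * (1 - d) = - g * d \<Longrightarrow> g = 0"
  by (simp add: algebra_simps)

context pg
begin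

lemma n1pos: "n1 > 0"
proof (rule ccontr)
  assume "\<not> n1 > 0"
  then have "n1 = 0" by simp
  then have g: "generated c1 m1 {} = vecs m1" using A1 unfolding adapted_def by simp
  have "subalgebra c1 m1 {\<lambda>_. 0}"
    unfolding subalgebra_def subspace_of_def vecs_def by (simp add: br_zero_left)
  then have "generated c1 m1 {} \<subseteq> {\<lambda>_. 0}" unfolding generated_def by auto
  then have "lcs c1 m1 0 = {\<lambda>_. 0}" using g by (intro sub0[OF _ lcs_zero]) simp
  then have "lcs c1 m1 (Suc 0) = {\<lambda>_. 0}" by (rule lcs_mono_zero)
  then show False using NA1 unfolding nonabelian_def by simp
qed

lemma n2pos: "n2 > 0"
proof (rule ccontr)
  assume "\<not> n2 > 0"
  then have "n2 = 0" by simp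
  then have g: "generated c2 m2 {} = vecs m2" using A2 unfolding adapted_def by simp
  have "subalgebra c2 m2 {\<lambda>_. 0}"
    unfolding subalgebra_def subspace_of_def vecs_def by (simp add: br_zero_left)
  then have "generated c2 m2 {} \<subseteq> {\<lambda>_. 0}" unfolding generated_def by auto
  then have "lcs c2 m2 0 = {\<lambda>_. 0}" using g by (intro sub0[OF _ lcs_zero]) simp
  then have "lcs c2 m2 (Suc 0) = {\<lambda>_. 0}" by (rule lcs_mono_zero)
  then show False using NA2 unfolding nonabelian_def by simp
qed

lemma zcoord:
  assumes "i < n1" "j < n2"
  shows "bP x y (m1 + m2 + i * n2 + j) = x i * y (m1 + j) - x (m1 + j) * y i"
proof -
  have "i * n2 + j < (i + 1) * n2" using assms by simp
  also have "\<dots> \<le> n1 * n2" using assms by (intro mult_right_mono) auto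
  finally have lt: "i * n2 + j < n1 * n2" .
  have d: "(i * n2 + j) div n2 = i" "(i * n2 + j) mod n2 = j" using assms divmod_unique by auto
  show ?thesis unfolding closed using lt d by (simp add: br_def e2_def zt_def)
qed

lemma bvec_Z:
  assumes "m1 + m2 \<le> t" "t < M"
  shows "bvec t = bP (bvec ((t - (m1 + m2)) div n2)) (bvec (m1 + (t - (m1 + m2)) mod n2))"
proof -
  define p where "p = t - (m1 + m2)"
  define i where "i = p div n2"
  define j where "j = p mod n2"
  have "p < n1 * n2" using assms unfolding p_def by linarith
  then have i: "i < n1" unfolding i_def by (simp add: less_mult_imp_div_less)
  have j: "j < n2" using n2pos unfolding j_def by simp
  have r1: "R1 (bvec (m1 + j)) = (\<lambda>_. 0)" unfolding r1_def bvec_def by auto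
  have r2: "R2 (bvec i) = (\<lambda>_. 0)" using i nm unfolding r2_def bvec_def by auto
  have z: "ZT (bvec i) (bvec (m1 + j)) k = bvec t k" for k
  proof (cases "m1 + m2 \<le> k \<and> k < M")
    case True
    define q where "q = k - (m1 + m2)"
    have "(q div n2 = i \<and> q mod n2 = j) \<longleftrightarrow> k = t"
    proof
      assume "q div n2 = i \<and> q mod n2 = j"
      then have "q = p" unfolding i_def j_def by (metis div_mult_mod_eq)
      then show "k = t" using True assms unfolding q_def p_def by linarith
    qed (simp add: q_def p_def i_def j_def)
    moreover have "m1 + q mod n2 \<noteq> i" using i nm by linarith
    ultimately show ?thesis using True unfolding zt_def q_def[symmetric] bvec_def by auto
  next
    case False
    then show ?thesis using assms unfolding zt_def bvec_def by auto
  qed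
  show ?thesis unfolding closed p_def[symmetric] i_def[symmetric] j_def[symmetric] r1 r2
    using z by (simp add: br_zero_left br_zero_right e2_zero fun_eq_iff)
qed

lemma bvec_vecs: "t < m \<Longrightarrow> bvec t \<in> vecs m" unfolding bvec_def vecs_def by auto

lemma bvec_lcs1:
  assumes "t < M" "\<not> t < n1" "\<not> (m1 \<le> t \<and> t < m1 + n2)"
  shows "bvec t \<in> lcs P M 1"
proof (cases "t < m1")
  case True
  then have "bvec t \<in> lin_span (bvec ` {n1..<m1})" using assms by (intro span_base) auto
  then have "bvec t \<in> lcs c1 m1 1" using A1 unfolding adapted_def by simp
  then show ?thesis using lcs_emb1 by blast
next
  case F: False
  show ?thesis
  proof (cases "t < m1 + m2")
    case True
    then have "bvec (t - m1) \<in> lin_span (bvec ` {n2..<m2})" using assms F by (intro span_base imageI) auto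
    then have "bvec (t - m1) \<in> lcs c2 m2 1" using A2 unfolding adapted_def by simp
    moreover have "E2 (bvec (t - m1)) = bvec t" using F True unfolding e2_def bvec_def by (auto simp: fun_eq_iff)
    ultimately show ?thesis using lcs_emb2[of 1] by force
  next
    case False
    define i where "i = (t - (m1 + m2)) div n2"
    define j where "j = (t - (m1 + m2)) mod n2"
    have "t - (m1 + m2) < n1 * n2" using assms False by linarith
    then have i: "i < n1" unfolding i_def by (simp add: less_mult_imp_div_less)
    have j: "j < n2" using n2pos unfolding j_def by simp
    have "bvec t = bP (bvec i) (bvec (m1 + j))" unfolding i_def j_def
      using bvec_Z False assms by simp
    moreover have "bvec i \<in> vecs M" "bvec (m1 + j) \<in> lcs P M 0" using i j nm bvec_vecs by auto
    ultimately show ?thesis unfolding One_nat_def lcs.simps(2) by (auto intro!: span_base)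
  qed
qed

lemma ker_lcs1:
  assumes v: "v \<in> vecs M" and p: "pi0 v"
  shows "v \<in> lcs P M 1"
proof -
  define N where "N = {t. t < M \<and> \<not> t < n1 \<and> \<not> (m1 \<le> t \<and> t < m1 + n2)}"
  have fN: "finite N" unfolding N_def by simp
  have eq: "v = (\<lambda>k. \<Sum>t\<in>N. (\<lambda>k. v t * bvec t k) k)"
  proof
    fix k
    have "(\<Sum>t\<in>N. v t * bvec t k) = (\<Sum>t\<in>N. if k = t then v k else 0)"
      unfolding bvec_def by (intro sum.cong) auto
    also have "\<dots> = (if k \<in> N then v k else 0)" using fN by simp
    also have "\<dots> = v k"
    proof (cases "k \<in> N")
      case False
      then have "k \<ge> M \<or> k < n1 \<or> (m1 \<le> k \<and> k < m1 + n2)" unfolding N_def by auto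
      then have "v k = 0"
      proof (elim disjE)
        assume "m1 \<le> k \<and> k < m1 + n2"
        then show ?thesis using p unfolding pi0_def by (metis add_diff_inverse_nat add_less_cancel_left not_less)
      qed (use v p in \<open>auto simp: vecs_def pi0_def\<close>)
      then show ?thesis by simp
    qed simp
    finally show "v k = (\<Sum>t\<in>N. (\<lambda>k. v t * bvec t k) k)" by simp
  qed
  have "(\<lambda>k. \<Sum>t\<in>N. (\<lambda>k. v t * bvec t k) k) \<in> lcs P M 1"
  proof (rule closed_sum[OF lcs_closed fN])
    fix t assume "t \<in> N"
    then have "bvec t \<in> lcs P M 1" unfolding N_def by (intro bvec_lcs1) auto
    then show "(\<lambda>k. v t * bvec t k) \<in> lcs P M 1" by (rule lcs_cl(3))
  qed
  then show ?thesis using eq by simp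
qed

end


context pg
begin

lemma ideal_facts:
  assumes "lie_ideal P M I"
  shows "I \<subseteq> vecs M" "(\<lambda>_. 0) \<in> I" "x \<in> I \<Longrightarrow> y \<in> I \<Longrightarrow> (\<lambda>k. x k + y k) \<in> I"
    "x \<in> I \<Longrightarrow> (\<lambda>k. a * x k) \<in> I" "x \<in> vecs M \<Longrightarrow> y \<in> I \<Longrightarrow> bP x y \<in> I"
proof -
  have s: "I \<subseteq> vecs M \<and> (\<lambda>_. 0) \<in> I \<and> (\<forall>x\<in>I. \<forall>y\<in>I. (\<lambda>k. x k + y k) \<in> I) \<and> (\<forall>a. \<forall>x\<in>I. (\<lambda>k. a * x k) \<in> I)"
    using assms unfolding lie_ideal_def subspace_of_def by (rule conjunct1)
  have b: "\<forall>x\<in>vecs M. \<forall>y\<in>I. bP x y \<in> I"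
    using assms unfolding lie_ideal_def by (rule conjunct2)
  show "I \<subseteq> vecs M" using s by (rule conjunct1)
  show "(\<lambda>_. 0) \<in> I" using s by (elim conjE)
  show "x \<in> I \<Longrightarrow> y \<in> I \<Longrightarrow> (\<lambda>k. x k + y k) \<in> I" by (rule s[THEN conjunct2, THEN conjunct2, THEN conjunct1, rule_format])
  show "x \<in> I \<Longrightarrow> (\<lambda>k. a * x k) \<in> I" by (rule s[THEN conjunct2, THEN conjunct2, THEN conjunct2, rule_format])
  show "x \<in> vecs M \<Longrightarrow> y \<in> I \<Longrightarrow> bP x y \<in> I" by (rule b[rule_format])
qed

lemma ideal_closed: "lie_ideal P M I \<Longrightarrow> closed_sp I"
  unfolding closed_sp_def using ideal_facts(2,3,4) by simp

lemma ideal_left: "lie_ideal P M I \<Longrightarrow> x \<in> I \<Longrightarrow> y \<in> vecs M \<Longrightarrow> bP x y \<in> I"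
proof -
  assume I: "lie_ideal P M I" and x: "x \<in> I" and y: "y \<in> vecs M"
  have "bP x y = (\<lambda>k. (-1) * bP y x k)"
    using br_antisym[OF lie subsetD[OF ideal_facts(1)[OF I] x] y] by simp
  moreover have "(\<lambda>k. (-1) * bP y x k) \<in> I" by (rule ideal_facts(4)[OF I ideal_facts(5)[OF I y x]])
  ultimately show ?thesis by simp
qed

lemma kill:
  assumes nil: "nilpotent_lie P M"
    and I: "lie_ideal P M I" and J: "lie_ideal P M J"
    and inter: "\<And>s. s \<in> I \<Longrightarrow> s \<in> J \<Longrightarrow> s = (\<lambda>_. 0)"
    and dec: "\<And>a. a \<in> vecs M \<Longrightarrow> \<exists>s\<in>I. \<exists>t\<in>J. a = (\<lambda>k. s k + t k)"
    and ker: "\<And>q. q \<in> J \<Longrightarrow> pi0 q"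
  shows "J \<subseteq> {\<lambda>_. 0}"
proof -
  have "J \<subseteq> lcs P M k" for k
  proof (induction k)
    case 0 then show ?case using ideal_facts(1)[OF J] by simp
  next
    case (Suc k)
    define B where "B = {w. \<exists>s t. s \<in> I \<and> t \<in> lcs P M (Suc k) \<and> t \<in> J \<and> w = (\<lambda>x. s x + t x)}"
    have BI: "s \<in> I \<Longrightarrow> t \<in> lcs P M (Suc k) \<Longrightarrow> t \<in> J \<Longrightarrow> w = (\<lambda>x. s x + t x) \<Longrightarrow> w \<in> B" for s t w
      unfolding B_def by (rule CollectI, rule exI[of _ s], rule exI[of _ t]) simp
    have BE: "w \<in> B \<Longrightarrow> (\<And>s t. s \<in> I \<Longrightarrow> t \<in> lcs P M (Suc k) \<Longrightarrow> t \<in> J \<Longrightarrow> w = (\<lambda>x. s x + t x) \<Longrightarrow> R) \<Longrightarrow> R"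
      for w R unfolding B_def by (elim CollectE exE conjE)
    have clB: "closed_sp B"
      unfolding closed_sp_def
    proof (intro conjI allI ballI)
      show "(\<lambda>_. 0) \<in> B" by (rule BI[OF ideal_facts(2)[OF I] lcs_cl(1) ideal_facts(2)[OF J]]) simp
    next
      fix x y assume "x \<in> B" "y \<in> B"
      obtain s t where st: "s \<in> I" "t \<in> lcs P M (Suc k)" "t \<in> J" "x = (\<lambda>x. s x + t x)"
        using \<open>x \<in> B\<close> by (rule BE)
      obtain s' t' where st': "s' \<in> I" "t' \<in> lcs P M (Suc k)" "t' \<in> J" "y = (\<lambda>x. s' x + t' x)"
        using \<open>y \<in> B\<close> by (rule BE)
      show "(\<lambda>k. x k + y k) \<in> B"
        by (rule BI[OF ideal_facts(3)[OF I st(1) st'(1)] lcs_cl(2)[OF st(2) st'(2)] ideal_facts(3)[OF J st(3) st'(3)]])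
           (simp add: st st' algebra_simps)
    next
      fix a x assume "x \<in> B"
      obtain s t where st: "s \<in> I" "t \<in> lcs P M (Suc k)" "t \<in> J" "x = (\<lambda>x. s x + t x)"
        using \<open>x \<in> B\<close> by (rule BE)
      show "(\<lambda>k. a * x k) \<in> B"
        by (rule BI[OF ideal_facts(4)[OF I st(1), where a=a] lcs_cl(3)[OF st(2), where a=a] ideal_facts(4)[OF J st(3), where a=a]])
           (simp add: st algebra_simps)
    qed
    have gen: "bP a b \<in> B" if a: "a \<in> vecs M" and b: "b \<in> vecs M" for a b
    proof -
      obtain aI aJ where ad: "aI \<in> I" "aJ \<in> J" "a = (\<lambda>k. aI k + aJ k)" using dec[OF a] by blast
      obtain bI bJ where bd: "bI \<in> I" "bJ \<in> J" "b = (\<lambda>k. bI k + bJ k)" using dec[OF b] by blast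
      have vI: "aI \<in> vecs M" "bI \<in> vecs M" using ad bd ideal_facts(1)[OF I] by blast+
      have vJ: "aJ \<in> vecs M" "bJ \<in> vecs M" using ad bd ideal_facts(1)[OF J] by blast+
      have e: "bP a b = (\<lambda>k. (bP aI b k + bP aJ bI k) + bP aJ bJ k)"
        unfolding ad(3) br_add_left unfolding bd(3) br_add_right by (simp add: add.assoc)
      have s: "(\<lambda>k. bP aI b k + bP aJ bI k) \<in> I"
        by (rule ideal_facts(3)[OF I ideal_left[OF I ad(1) b] ideal_facts(5)[OF I vJ(1) bd(1)]])
      have t1: "bP aJ bJ \<in> J" by (rule ideal_facts(5)[OF J vJ(1) bd(2)])
      have "bJ \<in> lcs P M k" using Suc.IH bd(2) by blast
      then have t2: "bP aJ bJ \<in> lcs P M (Suc k)" by (rule br_in_lcs[OF vJ(1)])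
      show ?thesis by (rule BI[OF s t2 t1 e])
    qed
    have "lcs P M 1 \<subseteq> B"
      unfolding One_nat_def lcs.simps
    proof (rule span_sub[OF clB], rule subsetI)
      fix w assume "w \<in> {bP x y |x y. x \<in> vecs M \<and> y \<in> vecs M}"
      then obtain x y where "w = bP x y" "x \<in> vecs M" "y \<in> vecs M" by auto
      then show "w \<in> B" using gen by simp
    qed
    show ?case
    proof
      fix q assume q: "q \<in> J"
      have "q \<in> lcs P M 1" by (rule ker_lcs1[OF subsetD[OF ideal_facts(1)[OF J] q] ker[OF q]])
      then have "q \<in> B" using \<open>lcs P M 1 \<subseteq> B\<close> by blast
      then obtain s t where st: "s \<in> I" "t \<in> lcs P M (Suc k)" "t \<in> J" "q = (\<lambda>x. s x + t x)"
        by (rule BE)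
      have "(\<lambda>x. q x + (-1) * t x) \<in> J"
        by (rule ideal_facts(3)[OF J q ideal_facts(4)[OF J st(3)]])
      moreover have "(\<lambda>x. q x + (-1) * t x) = s" using st(4) by (simp add: fun_eq_iff)
      ultimately have "s \<in> J" by simp
      then have "s = (\<lambda>_. 0)" using inter st(1) by blast
      then have "q = t" using st(4) by simp
      then show "q \<in> lcs P M (Suc k)" using st(2) by simp
    qed
  qed
  moreover obtain k where "lcs P M k = {\<lambda>_. 0}" using nil unfolding nilpotent_lie_def by blast
  ultimately show ?thesis by blast
qed

lemma kerpi:
  assumes xA: "x \<in> A" and uA: "u \<in> A" and x: "x 0 = 1" "x m1 = 0" and u: "u 0 = 0" "u m1 = 1"
    and K: "\<And>p q i j. p \<in> A \<Longrightarrow> q \<in> B \<Longrightarrow> i < n1 \<Longrightarrow> j < n2 \<Longrightarrow> p i * q (m1 + j) = q i * p (m1 + j)"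
    and q: "q \<in> B"
  shows "pi0 q"
proof -
  have "u 0 * q (m1 + 0) = q 0 * u (m1 + 0)" using K[OF uA q n1pos n2pos] .
  then have q0: "q 0 = 0" using u by simp
  have qj: "q (m1 + j) = 0" if "j < n2" for j
    using K[OF xA q n1pos that] x q0 by simp
  have qi: "q i = 0" if "i < n1" for i
    using K[OF uA q that n2pos] u qj[OF n2pos] by simp
  show ?thesis unfolding pi0_def using qi qj by blast
qed

lemma nonsplit_P:
  assumes nil: "nilpotent_lie P M"
  shows "nonsplit P M"
  unfolding nonsplit_def
proof
  assume "\<exists>I J. lie_ideal P M I \<and> lie_ideal P M J \<and> I \<noteq> {\<lambda>_. 0} \<and> J \<noteq> {\<lambda>_. 0} \<and>
      I \<inter> J = {\<lambda>_. 0} \<and> {\<lambda>k. x k + y k |x y. x \<in> I \<and> y \<in> J} = vecs M"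
  then obtain I J where I: "lie_ideal P M I" and J: "lie_ideal P M J" and In: "I \<noteq> {\<lambda>_. 0}"
    and Jn: "J \<noteq> {\<lambda>_. 0}" and IJ: "I \<inter> J = {\<lambda>_. 0}"
    and sm: "{\<lambda>k. x k + y k |x y. x \<in> I \<and> y \<in> J} = vecs M" by blast
  have inter: "s \<in> I \<Longrightarrow> s \<in> J \<Longrightarrow> s = (\<lambda>_. 0)" for s using IJ by blast
  have dec: "\<exists>s\<in>I. \<exists>t\<in>J. a = (\<lambda>k. s k + t k)" if ha: "a \<in> vecs M" for a
  proof -
    have "a \<in> {\<lambda>k. x k + y k |x y. x \<in> I \<and> y \<in> J}" using ha sm by simp
    then obtain x y where xy: "a = (\<lambda>k. x k + y k)" "x \<in> I" "y \<in> J" by auto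
    then show ?thesis using xy by (intro bexI[of _ x] bexI[of _ y])
  qed
  have dec': "\<exists>s\<in>J. \<exists>t\<in>I. a = (\<lambda>k. s k + t k)" if ha: "a \<in> vecs M" for a
  proof -
    obtain x y where xy: "x \<in> I" "y \<in> J" "a = (\<lambda>k. x k + y k)" using dec[OF ha] by blast
    have "a = (\<lambda>k. y k + x k)" unfolding xy(3) by (simp add: add.commute)
    then show ?thesis using xy(1,2) by (intro bexI[of _ y] bexI[of _ x])
  qed
  have cross: "bP p q = (\<lambda>_. 0)" if p: "p \<in> I" and q: "q \<in> J" for p q
    using inter[OF ideal_left[OF I p subsetD[OF ideal_facts(1)[OF J] q]]
        ideal_facts(5)[OF J subsetD[OF ideal_facts(1)[OF I] p] q]] .
  have K: "p i * q (m1 + j) = q i * p (m1 + j)" if "p \<in> I" "q \<in> J" "i < n1" "j < n2" for p q i j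
    using zcoord[OF that(3,4), of p q] cross[OF that(1,2)] by (simp add: mult.commute)
  have K': "p i * q (m1 + j) = q i * p (m1 + j)" if "p \<in> J" "q \<in> I" "i < n1" "j < n2" for p q i j
    using K[OF that(2,1,3,4)] by (simp add: mult.commute)
  have m1: "0 < m1" using n1pos nm by simp
  obtain x y where xy: "x \<in> I" "y \<in> J" "bvec 0 = (\<lambda>k. x k + y k)"
    using dec[OF bvec_vecs[of 0 M]] m1 by auto
  obtain u w where uw: "u \<in> I" "w \<in> J" "bvec m1 = (\<lambda>k. u k + w k)"
    using dec[OF bvec_vecs[of m1 M]] n2pos n1pos by auto
  have e1: "x 0 + y 0 = 1" "x m1 + y m1 = 0" using fun_cong[OF xy(3), of 0] fun_cong[OF xy(3), of m1] m1
    unfolding bvec_def by auto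
  have e2: "u 0 + w 0 = 0" "u m1 + w m1 = 1" using fun_cong[OF uw(3), of 0] fun_cong[OF uw(3), of m1] m1
    unfolding bvec_def by auto
  have y0: "y 0 = 1 - x 0" "y m1 = - x m1" using e1 by (simp_all add: eq_diff_eq add_eq_0_iff add.commute)
  have w0: "w 0 = - u 0" "w m1 = 1 - u m1" using e2 by (simp_all add: eq_diff_eq add_eq_0_iff add.commute)
  have kxy: "x 0 * y m1 = y 0 * x m1" using K[OF xy(1) xy(2) n1pos n2pos] by simp
  have kuw: "u 0 * w m1 = w 0 * u m1" using K[OF uw(1) uw(2) n1pos n2pos] by simp
  have kxw: "x 0 * w m1 = w 0 * x m1" using K[OF xy(1) uw(2) n1pos n2pos] by simp
  have kuy: "u 0 * y m1 = y 0 * u m1" using K[OF uw(1) xy(2) n1pos n2pos] by simp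
  have beta: "x m1 = 0" using kxy unfolding y0 by (intro alg1[of "x 0"]) (simp add: mult.commute)
  have gamma: "u 0 = 0" using kuw unfolding w0 by (intro alg2[of "u 0" "u m1"]) simp
  have a1: "x 0 * (1 - u m1) = 0" using kxw unfolding w0 gamma beta by simp
  have a2: "(1 - x 0) * u m1 = 0" using kuy unfolding y0 gamma beta by simp
  have "x 0 = x 0 * u m1" using a1 by (simp add: right_diff_distrib)
  moreover have "u m1 = x 0 * u m1" using a2 by (simp add: left_diff_distrib)
  ultimately have ad: "x 0 = u m1" by simp
  have "x 0 * (1 - x 0) = 0" using a1 ad by simp
  then have "x 0 = 0 \<or> x 0 = 1" by auto
  then show False
  proof
    assume "x 0 = 1"
    then have "\<forall>q\<in>J. pi0 q" using kerpi[OF xy(1) uw(1) _ beta gamma, of J] ad K by auto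
    then have "J \<subseteq> {\<lambda>_. 0}" using kill[OF nil I J inter dec] by blast
    then show False using Jn ideal_facts(2)[OF J] by blast
  next
    assume h: "x 0 = 0"
    have yy: "y 0 = 1" "y m1 = 0" using y0 h beta by simp_all
    have ww: "w 0 = 0" "w m1 = 1" using w0 gamma ad h by simp_all
    have "\<forall>q\<in>I. pi0 q" using kerpi[OF xy(2) uw(2) yy ww, of I] K' by auto
    moreover have "s \<in> J \<Longrightarrow> s \<in> I \<Longrightarrow> s = (\<lambda>_. 0)" for s using inter by blast
    ultimately have "I \<subseteq> {\<lambda>_. 0}" using kill[OF nil J I _ dec'] by blast
    then show False using In ideal_facts(2)[OF I] by blast
  qed
qed

end


theorem mainTheorem4:
  fixes c1 c2 :: "nat \<Rightarrow> nat \<Rightarrow> nat \<Rightarrow> complex" and m1 m2 n1 n2 :: nat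
  assumes "is_lie_alg c1 m1" and "nilpotent_lie c1 m1" and "nonabelian c1 m1"
      and "adapted c1 m1 n1" and "nonsplit c1 m1"
      and "is_lie_alg c2 m2" and "nilpotent_lie c2 m2" and "nonabelian c2 m2"
      and "adapted c2 m2 n2" and "nonsplit c2 m2"
  shows "is_lie_alg (prod_gen c1 m1 n1 c2 m2 n2) (m1 + m2 + n1 * n2)
       \<and> nilpotent_lie (prod_gen c1 m1 n1 c2 m2 n2) (m1 + m2 + n1 * n2)
       \<and> nonsplit (prod_gen c1 m1 n1 c2 m2 n2) (m1 + m2 + n1 * n2)
       \<and> nilindex (prod_gen c1 m1 n1 c2 m2 n2) (m1 + m2 + n1 * n2)
           = max (nilindex c1 m1) (nilindex c2 m2)"
proof -
  interpret pg c1 m1 n1 c2 m2 n2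
    by (rule pg.intro) (use assms in simp_all)
  have nil: "nilpotent_lie (prod_gen c1 m1 n1 c2 m2 n2) (m1 + m2 + n1 * n2)"
    by (rule nil_results(1)[OF assms(2) assms(7)])
  show ?thesis
    using lie nil nonsplit_P[OF nil] nil_results(2)[OF assms(2) assms(7)] by simp
qed

end
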